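(* Suppose every request of the input $\sigma$ is a triggering request with respect to ALG run on $\sigma$. Then for every request $r_k$ of $\sigma$, the position of $e_k$ in ALG's list remains unchanged throughout the time interval $[a_k,q_k)$ (and also at time $q_k$ before ALG acts at that time).
   Context: List Update with Time Windows. A set $\mathbb{E}$ of $n$ elements is kept in an ordered list (position $1$ is the head). An input $\sigma$ is a sequence of requests $r_1,\dots,r_m$; request $r_k$ specifies an element $e_k\in\mathbb{E}$, an arrival time $a_k$ and a deadline $q_k\ge a_k$. An algorithm may perform an access up to position $i$ at cost $i$, serving every pending request whose element currently lies in positions $1,\dots,i$, and may swap adjacent elements at cost $1$; actions are instantaneous; every request must be served within $[a_k,q_k]$. Algorithm ALG: whenever the current time equals the deadline of at least one pending request, let the triggering element be the element at the largest current position among those elements having a pending request whose deadline is the current time, and let $i$ be its position. ALG accesses the first $\min(2i-1,n)$ positions and then moves the triggering element to the front by $i-1$ adjacent swaps. At each such event the triggering request is one (arbitrarily fixed) pending request for the triggering element whose deadline is the current time. A request of $\sigma$ is a triggering request if it is the triggering request of some event of ALG on $\sigma$. *)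

theory Defs
  imports Complex_Main
begin

text \<open>A request is a triple (element, arrival time, deadline). An input is a list of
  requests; request r_k is the k-th entry (0-based index k).\<close>

type_synonym 'a request = "'a \<times> real \<times> real"

definition req_elem :: "'a request \<Rightarrow> 'a" where "req_elem r = fst r"
definition req_arr :: "'a request \<Rightarrow> real" where "req_arr r = fst (snd r)"
definition req_dl :: "'a request \<Rightarrow> real" where "req_dl r = snd (snd r)"

definition pos :: "'a list \<Rightarrow> 'a \<Rightarrow> nat" where
  "pos L x = length (takeWhile (\<lambda>y. y \<noteq> x) L) + 1"

definition mtf :: "'a list \<Rightarrow> 'a \<Rightarrow> 'a list" where
  "mtf L x = x # filter (\<lambda>y. y \<noteq> x) L"

text \<open>State of ALG: (current list, set of served request indices, set of triggering request
  indices). The selection function sel picks the (arbitrarily fixed) triggering request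
  among the pending requests of the triggering element with deadline equal to the current time.\<close>

definition alg_step ::
  "'a request list \<Rightarrow> (real \<Rightarrow> nat set \<Rightarrow> nat) \<Rightarrow> real \<Rightarrow>
   'a list \<times> nat set \<times> nat set \<Rightarrow> 'a list \<times> nat set \<times> nat set" where
  "alg_step \<sigma> sel t st = (case st of (L, S, T) \<Rightarrow>
     let pend = {k. k < length \<sigma> \<and> req_arr (\<sigma> ! k) \<le> t \<and> k \<notin> S};
         due = {k \<in> pend. req_dl (\<sigma> ! k) = t}
     in if due = {} then (L, S, T) else
       let i = Max ((\<lambda>k. pos L (req_elem (\<sigma> ! k))) ` due);
           x = L ! (i - 1);
           j = min (2 * i - 1) (length L);
           served = {k \<in> pend. pos L (req_elem (\<sigma> ! k)) \<le> j}
       in (mtf L x, S \<union> served, insert (sel t {k \<in> due. req_elem (\<sigma> ! k) = x}) T))"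

definition deadlines :: "'a request list \<Rightarrow> real set" where
  "deadlines \<sigma> = (\<lambda>k. req_dl (\<sigma> ! k)) ` {..<length \<sigma>}"

definition state_before ::
  "'a request list \<Rightarrow> (real \<Rightarrow> nat set \<Rightarrow> nat) \<Rightarrow> 'a list \<Rightarrow> real \<Rightarrow> 'a list \<times> nat set \<times> nat set" where
  "state_before \<sigma> sel L0 t =
     fold (alg_step \<sigma> sel) (sorted_list_of_set {d \<in> deadlines \<sigma>. d < t}) (L0, {}, {})"

definition state_after ::
  "'a request list \<Rightarrow> (real \<Rightarrow> nat set \<Rightarrow> nat) \<Rightarrow> 'a list \<Rightarrow> real \<Rightarrow> 'a list \<times> nat set \<times> nat set" where
  "state_after \<sigma> sel L0 t =
     fold (alg_step \<sigma> sel) (sorted_list_of_set {d \<in> deadlines \<sigma>. d \<le> t}) (L0, {}, {})"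

definition alg_list_before :: "'a request list \<Rightarrow> (real \<Rightarrow> nat set \<Rightarrow> nat) \<Rightarrow> 'a list \<Rightarrow> real \<Rightarrow> 'a list" where
  "alg_list_before \<sigma> sel L0 t = fst (state_before \<sigma> sel L0 t)"

definition alg_list_after :: "'a request list \<Rightarrow> (real \<Rightarrow> nat set \<Rightarrow> nat) \<Rightarrow> 'a list \<Rightarrow> real \<Rightarrow> 'a list" where
  "alg_list_after \<sigma> sel L0 t = fst (state_after \<sigma> sel L0 t)"

definition triggering_requests :: "'a request list \<Rightarrow> (real \<Rightarrow> nat set \<Rightarrow> nat) \<Rightarrow> 'a list \<Rightarrow> nat set" where
  "triggering_requests \<sigma> sel L0 =
     snd (snd (fold (alg_step \<sigma> sel) (sorted_list_of_set (deadlines \<sigma>)) (L0, {}, {})))"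

end

theory Submission
  imports Defs
begin

lemma tw_set:
  assumes "sorted_wrt (<) (ds::real list)" "\<forall>x y. x \<le> y \<longrightarrow> P y \<longrightarrow> P x"
  shows "set (takeWhile P ds) = {d \<in> set ds. P d}"
  using assms
proof (induction ds)
  case Nil then show ?case by simp
next
  case (Cons a ds)
  show ?case
  proof (cases "P a")
    case True then show ?thesis using Cons by auto
  next
    case False
    then have "\<forall>d\<in>set ds. \<not> P d" using Cons.prems by (meson less_le_not_le order_less_imp_le sorted_wrt.simps(2))
    then show ?thesis using False by auto
  qed
qed

lemma slos_tw:
  assumes "finite (D::real set)" "\<forall>x y. x \<le> y \<longrightarrow> P y \<longrightarrow> P x"
  shows "sorted_list_of_set {d\<in>D. P d} = takeWhile P (sorted_list_of_set D)"
proof -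
  let ?l = "takeWhile P (sorted_list_of_set D)"
  have s: "sorted_wrt (<) ?l" using sorted_wrt_takeWhile sorted_list_of_set.strict_sorted_key_list_of_set by auto
  have st: "set ?l = {d\<in>D. P d}" using tw_set[OF _ assms(2)] assms(1) by simp
  have "distinct ?l" using s strict_sorted_iff by blast
  then have "length ?l = card {d\<in>D. P d}" using st distinct_card by fastforce
  then show ?thesis using s st sorted_list_of_set.sorted_key_list_of_set_unique[of "{d\<in>D. P d}" ?l] assms(1) by simp
qed

lemma tw_len_nth:
  assumes "sorted_wrt (<) (ds::real list)" "n < length ds"
  shows "length (takeWhile (\<lambda>d. d < ds ! n) ds) = n"
  using assms
proof (induction ds arbitrary: n)
  case Nil then show ?case by simp
next
  case (Cons a ds)
  show ?case
  proof (cases n)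
    case 0 then show ?thesis by simp
  next
    case (Suc m)
    then have "a < ds ! m" using Cons.prems by auto
    then show ?thesis using Cons Suc by auto
  qed
qed

lemma pos_nth:
  assumes "distinct L" "n < length L"
  shows "pos L (L ! n) = Suc n"
proof -
  have L: "L = take n L @ L ! n # drop (Suc n) L" using assms(2) id_take_nth_drop by blast
  have "L ! n \<notin> set (take n L)" using assms
    by (metis L distinct_append not_distinct_conv_prefix)
  then have "takeWhile (\<lambda>y. y \<noteq> L ! n) (take n L @ L ! n # drop (Suc n) L) = take n L"
    by (subst takeWhile_append2) auto
  then have "takeWhile (\<lambda>y. y \<noteq> L ! n) L = take n L" using L by simp
  then show ?thesis unfolding pos_def using assms(2) by simp
qed

lemma tw_less: "e \<in> set xs \<Longrightarrow> length (takeWhile (\<lambda>y. y \<noteq> e) xs) < length xs"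
  by (induction xs) auto

lemma pos_le:
  assumes "e \<in> set L" shows "pos L e \<le> length L"
proof -
  have "length (takeWhile (\<lambda>y. y \<noteq> e) L) < length L"
    using assms by (rule tw_less)
  then show ?thesis unfolding pos_def by simp
qed

lemma pos_mtf:
  assumes "distinct L" "x \<in> set L" "e \<in> set L" "pos L x < pos L e"
  shows "pos (mtf L x) e = pos L e"
proof -
  obtain as bs where L: "L = as @ x # bs" using assms(2) split_list by metis
  have xn: "x \<notin> set as" "x \<notin> set bs" using assms(1) L by auto
  have px: "pos L x = length as + 1" unfolding pos_def L using xn by (subst takeWhile_append2) auto
  have ex: "e \<noteq> x" using assms(4) by auto
  have ea: "e \<notin> set as"
  proof
    assume "e \<in> set as"
    then have "length (takeWhile (\<lambda>y. y \<noteq> e) as) < length as" by (rule tw_less)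
    moreover have "takeWhile (\<lambda>y. y \<noteq> e) (as @ x # bs) = takeWhile (\<lambda>y. y \<noteq> e) as"
      using \<open>e \<in> set as\<close> by (rule takeWhile_append1) simp
    ultimately have "pos L e \<le> length as" unfolding pos_def L by simp
    then show False using px assms(4) by simp
  qed
  have f1: "filter (\<lambda>y. y \<noteq> x) as = as" using xn(1) by (subst filter_id_conv) auto
  have f2: "filter (\<lambda>y. y \<noteq> x) bs = bs" using xn(2) by (subst filter_id_conv) auto
  have f: "filter (\<lambda>y. y \<noteq> x) L = as @ bs" using f1 f2 L by simp
  have "takeWhile (\<lambda>y. y \<noteq> e) (as @ x # bs) = as @ x # takeWhile (\<lambda>y. y \<noteq> e) bs"
    using ea ex by (subst takeWhile_append2) auto
  moreover have "takeWhile (\<lambda>y. y \<noteq> e) (x # as @ bs) = x # as @ takeWhile (\<lambda>y. y \<noteq> e) bs"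
    using ea ex by (simp, subst takeWhile_append2) auto
  moreover have "mtf L x = x # as @ bs" unfolding mtf_def f ..
  ultimately show ?thesis unfolding pos_def using L by simp
qed

lemma nth_pos: "e \<in> set L \<Longrightarrow> L ! (pos L e - 1) = e"
  unfolding pos_def using nth_length_takeWhile[of "\<lambda>y. y \<noteq> e" L] tw_less[of e L] by simp

lemma step_cases:
  obtains (none) "alg_step \<sigma> sel t (L,S,T) = (L,S,T)"
  | (some) due i x j served where
    "due = {k. k < length \<sigma> \<and> req_arr (\<sigma> ! k) \<le> t \<and> k \<notin> S \<and> req_dl (\<sigma> ! k) = t}"
    "due \<noteq> {}" "i = Max ((\<lambda>k. pos L (req_elem (\<sigma> ! k))) ` due)" "x = L ! (i - 1)"
    "j = min (2 * i - 1) (length L)"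
    "served = {k. k < length \<sigma> \<and> req_arr (\<sigma> ! k) \<le> t \<and> k \<notin> S \<and> pos L (req_elem (\<sigma> ! k)) \<le> j}"
    "alg_step \<sigma> sel t (L,S,T) = (mtf L x, S \<union> served, insert (sel t {k \<in> due. req_elem (\<sigma> ! k) = x}) T)"
proof -
  define due where "due = {k. k < length \<sigma> \<and> req_arr (\<sigma> ! k) \<le> t \<and> k \<notin> S \<and> req_dl (\<sigma> ! k) = t}"
  have due': "{k \<in> {k. k < length \<sigma> \<and> req_arr (\<sigma> ! k) \<le> t \<and> k \<notin> S}. req_dl (\<sigma> ! k) = t} = due"
    unfolding due_def by auto
  show ?thesis
  proof (cases "due = {}")
    case True
    then show ?thesis using none unfolding alg_step_def Let_def prod.case due' if_P[OF True] by blast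
  next
    case False
    define i where "i = Max ((\<lambda>k. pos L (req_elem (\<sigma> ! k))) ` due)"
    define x where "x = L ! (i - 1)"
    define j where "j = min (2 * i - 1) (length L)"
    define served where "served = {k. k < length \<sigma> \<and> req_arr (\<sigma> ! k) \<le> t \<and> k \<notin> S \<and> pos L (req_elem (\<sigma> ! k)) \<le> j}"
    have served': "{k \<in> {k. k < length \<sigma> \<and> req_arr (\<sigma> ! k) \<le> t \<and> k \<notin> S}. pos L (req_elem (\<sigma> ! k)) \<le> j} = served"
      unfolding served_def by auto
    have "alg_step \<sigma> sel t (L,S,T) = (mtf L x, S \<union> served, insert (sel t {k \<in> due. req_elem (\<sigma> ! k) = x}) T)"
      unfolding alg_step_def Let_def prod.case due' if_not_P[OF False] i_def[symmetric]
        x_def[symmetric] j_def[symmetric] served' ..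
    then show ?thesis using some[OF due_def False i_def x_def j_def served_def] by blast
  qed
qed

lemma step_facts:
  assumes st: "alg_step \<sigma> sel t (L,S,T) = (L',S',T')" and dist: "distinct L"
    and elems: "\<forall>k < length \<sigma>. req_elem (\<sigma> ! k) \<in> set L"
    and sel: "\<forall>t C. C \<noteq> {} \<longrightarrow> sel t C \<in> C"
  shows "distinct L' \<and> set L' = set L \<and> S \<subseteq> S' \<and> T \<subseteq> T' \<and>
     (\<forall>k. k \<in> T' \<and> k \<notin> T \<longrightarrow> k < length \<sigma> \<and> req_dl (\<sigma> ! k) = t \<and> k \<notin> S) \<and>
     (\<forall>k. k < length \<sigma> \<and> req_arr (\<sigma> ! k) \<le> t \<and> k \<notin> S' \<longrightarrow>
          pos L' (req_elem (\<sigma> ! k)) = pos L (req_elem (\<sigma> ! k)))"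
proof (cases \<sigma> sel t L S T rule: step_cases)
  case none
  then show ?thesis using st dist by auto
next
  case (some due i x j served)
  have fin: "finite due" using some(1) by auto
  have "i \<in> (\<lambda>k. pos L (req_elem (\<sigma> ! k))) ` due" using some(2,3) fin by simp
  then obtain k' where k': "k' \<in> due" "i = pos L (req_elem (\<sigma> ! k'))" by blast
  have e'L: "req_elem (\<sigma> ! k') \<in> set L" using elems k'(1) some(1) by auto
  have i1: "1 \<le> i" using k'(2) unfolding pos_def by simp
  have iL: "i \<le> length L" using k'(2) pos_le[OF e'L] by simp
  have xe: "x = req_elem (\<sigma> ! k')" using nth_pos[OF e'L] k'(2) some(4) by simp
  have xL: "x \<in> set L" using xe e'L by simp
  have px: "pos L x = i" using xe k'(2) by simp
  have eqs: "L' = mtf L x" "S' = S \<union> served" "T' = insert (sel t {k \<in> due. req_elem (\<sigma> ! k) = x}) T"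
    using st some(7) by auto
  have C: "{k \<in> due. req_elem (\<sigma> ! k) = x} \<noteq> {}" using k'(1) xe by auto
  have selin: "sel t {k \<in> due. req_elem (\<sigma> ! k) = x} \<in> due" using sel[rule_format, OF C] by simp
  have d: "distinct L'" using eqs(1) dist unfolding mtf_def by simp
  have s: "set L' = set L" using eqs(1) xL unfolding mtf_def by auto
  have tr: "\<forall>k. k \<in> T' \<and> k \<notin> T \<longrightarrow> k < length \<sigma> \<and> req_dl (\<sigma> ! k) = t \<and> k \<notin> S"
    using eqs(3) selin unfolding some(1) by blast
  have p: "pos L' (req_elem (\<sigma> ! k)) = pos L (req_elem (\<sigma> ! k))"
    if "k < length \<sigma>" "req_arr (\<sigma> ! k) \<le> t" "k \<notin> S'" for k
  proof -
    let ?e = "req_elem (\<sigma> ! k)"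
    have eL: "?e \<in> set L" using elems that(1) by simp
    have "k \<notin> served" "k \<notin> S" using that(3) eqs(2) by auto
    then have "\<not> pos L ?e \<le> j" using some(6) that by auto
    then have "pos L x < pos L ?e" using pos_le[OF eL] some(5) px i1 by linarith
    then show ?thesis using pos_mtf[OF dist xL eL] eqs(1) by simp
  qed
  have "S \<subseteq> S'" "T \<subseteq> T'" using eqs(2,3) by blast+
  then show ?thesis using d s tr p by blast
qed

lemma first_change:
  assumes "\<not> P (0::nat)" "P N"
  shows "\<exists>m<N. \<not> P m \<and> P (Suc m)"
  using assms
proof (induction N)
  case 0 then show ?case by simp
next
  case (Suc N)
  show ?case
  proof (cases "P N")
    case True
    then obtain m where "m < N" "\<not> P m \<and> P (Suc m)" using Suc by blast
    then show ?thesis using less_SucI by blast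
  next
    case False
    then show ?thesis using Suc.prems by (intro exI[of _ N]) simp
  qed
qed

lemma tw_not:
  assumes "sorted_wrt (<) (ds::real list)" "\<forall>x y. x \<le> y \<longrightarrow> P y \<longrightarrow> P x"
    "p < length ds" "length (takeWhile P ds) \<le> p"
  shows "\<not> P (ds ! p)"
proof
  assume P: "P (ds ! p)"
  have "\<And>i. i < Suc p \<Longrightarrow> P (ds ! i)"
  proof -
    fix i assume "i < Suc p"
    then have "ds ! i \<le> ds ! p" using assms(1,3) sorted_wrt_nth_less[of "(<)" ds i p]
      by (cases "i = p") auto
    then show "P (ds ! i)" using P assms(2) by blast
  qed
  then have "Suc p \<le> length (takeWhile P ds)" using length_takeWhile_less_P_nth[of "Suc p" P ds] assms(3) by simp
  then show False using assms(4) by simp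
qed

theorem mainTheorem4:
  fixes L0 :: "'a list" and \<sigma> :: "'a request list" and sel :: "real \<Rightarrow> nat set \<Rightarrow> nat"
  assumes dist: "distinct L0"
    and elems: "\<forall>k < length \<sigma>. req_elem (\<sigma> ! k) \<in> set L0"
    and windows: "\<forall>k < length \<sigma>. req_arr (\<sigma> ! k) \<le> req_dl (\<sigma> ! k)"
    and sel: "\<forall>t C. C \<noteq> {} \<longrightarrow> sel t C \<in> C"
    and all_trig: "\<forall>k < length \<sigma>. k \<in> triggering_requests \<sigma> sel L0"
  shows "\<forall>k < length \<sigma>.
           (\<forall>t. req_arr (\<sigma> ! k) \<le> t \<and> t \<le> req_dl (\<sigma> ! k) \<longrightarrow>
              pos (alg_list_before \<sigma> sel L0 t) (req_elem (\<sigma> ! k))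
              = pos (alg_list_before \<sigma> sel L0 (req_dl (\<sigma> ! k))) (req_elem (\<sigma> ! k))) \<and>
           (\<forall>t. req_arr (\<sigma> ! k) \<le> t \<and> t < req_dl (\<sigma> ! k) \<longrightarrow>
              pos (alg_list_after \<sigma> sel L0 t) (req_elem (\<sigma> ! k))
              = pos (alg_list_before \<sigma> sel L0 (req_dl (\<sigma> ! k))) (req_elem (\<sigma> ! k)))"
proof -
  define D where "D = deadlines \<sigma>"
  define ds where "ds = sorted_list_of_set D"
  define st where "st n = fold (alg_step \<sigma> sel) (take n ds) (L0, {}, {})" for n
  have finD: "finite D" unfolding D_def deadlines_def by simp
  have sorted: "sorted_wrt (<) ds" unfolding ds_def by simp
  have dsD: "set ds = D" unfolding ds_def using finD by simp
  have distds: "distinct ds" using sorted strict_sorted_iff by blast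
  have before: "alg_list_before \<sigma> sel L0 t = fst (st (length (takeWhile (\<lambda>d. d < t) ds)))" for t
  proof -
    have "sorted_list_of_set {d \<in> D. d < t} = takeWhile (\<lambda>d. d < t) ds"
      using slos_tw[OF finD, of "\<lambda>d. d < t"] unfolding ds_def by fastforce
    then show ?thesis unfolding alg_list_before_def state_before_def st_def D_def[symmetric]
      by (metis takeWhile_eq_take)
  qed
  have after: "alg_list_after \<sigma> sel L0 t = fst (st (length (takeWhile (\<lambda>d. d \<le> t) ds)))" for t
  proof -
    have "sorted_list_of_set {d \<in> D. d \<le> t} = takeWhile (\<lambda>d. d \<le> t) ds"
      using slos_tw[OF finD, of "\<lambda>d. d \<le> t"] unfolding ds_def by fastforce
    then show ?thesis unfolding alg_list_after_def state_after_def st_def D_def[symmetric]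
      by (metis takeWhile_eq_take)
  qed
  have trig: "triggering_requests \<sigma> sel L0 = snd (snd (st (length ds)))"
    unfolding triggering_requests_def st_def ds_def D_def by simp
  have stSuc: "st (Suc n) = alg_step \<sigma> sel (ds ! n) (st n)" if "n < length ds" for n
    unfolding st_def using that by (simp add: take_Suc_conv_app_nth)
  have st0: "st 0 = (L0, {}, {})" unfolding st_def by simp
  have inv: "distinct (fst (st n)) \<and> set (fst (st n)) = set L0" if "n \<le> length ds" for n
    using that
  proof (induction n)
    case 0 then show ?case using st0 dist by simp
  next
    case (Suc n)
    obtain L S T where e: "st n = (L,S,T)" by (cases "st n")
    obtain L' S' T' where e': "st (Suc n) = (L',S',T')" by (cases "st (Suc n)")
    have IH: "distinct L" "set L = set L0" using Suc e by auto
    have "alg_step \<sigma> sel (ds ! n) (L,S,T) = (L',S',T')" using stSuc[of n] Suc.prems e e' by simp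
    from step_facts[OF this IH(1) _ sel] elems IH(2) show ?case using e' by simp
  qed
  have facts: "distinct L' \<and> set L' = set L \<and> S \<subseteq> S' \<and> T \<subseteq> T' \<and>
     (\<forall>k. k \<in> T' \<and> k \<notin> T \<longrightarrow> k < length \<sigma> \<and> req_dl (\<sigma> ! k) = ds ! n \<and> k \<notin> S) \<and>
     (\<forall>k. k < length \<sigma> \<and> req_arr (\<sigma> ! k) \<le> ds ! n \<and> k \<notin> S' \<longrightarrow>
          pos L' (req_elem (\<sigma> ! k)) = pos L (req_elem (\<sigma> ! k)))"
    if "n < length ds" "st n = (L,S,T)" "st (Suc n) = (L',S',T')" for n L S T L' S' T'
  proof -
    have IH: "distinct L" "set L = set L0" using inv[of n] that by auto
    have "alg_step \<sigma> sel (ds ! n) (L,S,T) = (L',S',T')" using stSuc[of n] that by simp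
    from step_facts[OF this IH(1) _ sel] elems IH(2) show ?thesis by simp
  qed
  have Smono: "fst (snd (st n)) \<subseteq> fst (snd (st m))" if "n \<le> m" "m \<le> length ds" for n m
    using that
  proof (induction m rule: dec_induct)
    case base then show ?case by simp
  next
    case (step m)
    obtain L S T where e: "st m = (L,S,T)" by (cases "st m")
    obtain L' S' T' where e': "st (Suc m) = (L',S',T')" by (cases "st (Suc m)")
    have "S \<subseteq> S'" using facts[OF _ e e'] step by simp
    then show ?case using step e e' by auto
  qed
  show ?thesis
  proof (intro allI impI)
    fix k assume k: "k < length \<sigma>"
    define e where "e = req_elem (\<sigma> ! k)"
    define a where "a = req_arr (\<sigma> ! k)"
    define q where "q = req_dl (\<sigma> ! k)"
    have "q \<in> set ds" unfolding dsD D_def deadlines_def q_def using k by auto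
    then obtain n0 where n0: "n0 < length ds" "ds ! n0 = q" by (metis in_set_conv_nth)
    have bq: "length (takeWhile (\<lambda>d. d < q) ds) = n0" using tw_len_nth[OF sorted n0(1)] n0(2) by simp
    have "k \<in> snd (snd (st (length ds)))" using all_trig k trig by simp
    moreover have "k \<notin> snd (snd (st 0))" using st0 by simp
    ultimately obtain m where m: "m < length ds" "k \<notin> snd (snd (st m))" "k \<in> snd (snd (st (Suc m)))"
      using first_change[of "\<lambda>n. k \<in> snd (snd (st n))" "length ds"] by blast
    obtain L S T where e1: "st m = (L,S,T)" by (cases "st m")
    obtain L' S' T' where e1': "st (Suc m) = (L',S',T')" by (cases "st (Suc m)")
    have "req_dl (\<sigma> ! k) = ds ! m" "k \<notin> S" using facts[OF m(1) e1 e1'] m e1 e1' by auto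
    then have "ds ! m = ds ! n0" using n0 q_def by simp
    then have "m = n0" using distds m(1) n0(1) nth_eq_iff_index_eq by blast
    then have notS: "k \<notin> fst (snd (st n0))" using e1 \<open>k \<notin> S\<close> by simp
    have aq: "a \<le> q" using windows k a_def q_def by simp
    have keep: "pos (fst (st n)) e = pos (fst (st m')) e"
      if "m' \<le> n" "n \<le> n0" "\<forall>p. m' \<le> p \<and> p < n0 \<longrightarrow> a \<le> ds ! p" for m' n
      using that
    proof (induction n rule: dec_induct)
      case base then show ?case by simp
    next
      case (step p)
      obtain L S T where e: "st p = (L,S,T)" by (cases "st p")
      obtain L' S' T' where e': "st (Suc p) = (L',S',T')" by (cases "st (Suc p)")
      have pl: "p < length ds" using step n0 by simp
      have "k \<notin> fst (snd (st (Suc p)))" using Smono[of "Suc p" n0] notS step n0 by auto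
      then have "k \<notin> S'" using e' by simp
      moreover have "a \<le> ds ! p" using step by simp
      ultimately have "pos L' e = pos L e" using facts[OF pl e e'] k unfolding e_def a_def by blast
      then show ?case using step e e' by simp
    qed
    have q_before: "alg_list_before \<sigma> sel L0 q = fst (st n0)" using before bq by simp
    show "(\<forall>t. req_arr (\<sigma> ! k) \<le> t \<and> t \<le> req_dl (\<sigma> ! k) \<longrightarrow>
              pos (alg_list_before \<sigma> sel L0 t) (req_elem (\<sigma> ! k))
              = pos (alg_list_before \<sigma> sel L0 (req_dl (\<sigma> ! k))) (req_elem (\<sigma> ! k))) \<and>
           (\<forall>t. req_arr (\<sigma> ! k) \<le> t \<and> t < req_dl (\<sigma> ! k) \<longrightarrow>
              pos (alg_list_after \<sigma> sel L0 t) (req_elem (\<sigma> ! k))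
              = pos (alg_list_before \<sigma> sel L0 (req_dl (\<sigma> ! k))) (req_elem (\<sigma> ! k)))"
      unfolding e_def[symmetric] a_def[symmetric] q_def[symmetric] q_before
    proof (intro conjI allI impI)
      fix t assume t: "a \<le> t \<and> t \<le> q"
      define m' where "m' = length (takeWhile (\<lambda>d. d < t) ds)"
      have dc: "\<forall>x y. x \<le> y \<longrightarrow> y < t \<longrightarrow> x < t" by auto
      have "m' \<le> n0"
      proof (rule ccontr)
        assume "\<not> m' \<le> n0"
        then have "ds ! n0 < t" using takeWhile_nth[of n0 "\<lambda>d. d < t" ds] set_takeWhileD
          unfolding m'_def by (metis linorder_not_le nth_mem)
        then show False using n0(2) t by simp
      qed
      moreover have "\<forall>p. m' \<le> p \<and> p < n0 \<longrightarrow> a \<le> ds ! p"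
      proof (intro allI impI)
        fix p assume p: "m' \<le> p \<and> p < n0"
        then have "\<not> ds ! p < t" using tw_not[OF sorted dc, of p] n0(1) unfolding m'_def by simp
        then show "a \<le> ds ! p" using t by simp
      qed
      ultimately show "pos (alg_list_before \<sigma> sel L0 t) e = pos (fst (st n0)) e"
        using keep[of m' n0] before[of t] unfolding m'_def by simp
    next
      fix t assume t: "a \<le> t \<and> t < q"
      define m' where "m' = length (takeWhile (\<lambda>d. d \<le> t) ds)"
      have dc: "\<forall>x y. x \<le> y \<longrightarrow> y \<le> t \<longrightarrow> x \<le> t" by auto
      have "m' \<le> n0"
      proof (rule ccontr)
        assume "\<not> m' \<le> n0"
        then have "ds ! n0 \<le> t" using takeWhile_nth[of n0 "\<lambda>d. d \<le> t" ds] set_takeWhileD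
          unfolding m'_def by (metis linorder_not_le nth_mem)
        then show False using n0(2) t by simp
      qed
      moreover have "\<forall>p. m' \<le> p \<and> p < n0 \<longrightarrow> a \<le> ds ! p"
      proof (intro allI impI)
        fix p assume p: "m' \<le> p \<and> p < n0"
        then have "\<not> ds ! p \<le> t" using tw_not[OF sorted dc, of p] n0(1) unfolding m'_def by simp
        then show "a \<le> ds ! p" using t by simp
      qed
      ultimately show "pos (alg_list_after \<sigma> sel L0 t) e = pos (fst (st n0)) e"
        using keep[of m' n0] after[of t] unfolding m'_def by simp
    qed
  qed
qed

end
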